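(* Let $k\ge 2$, $n\ge1$, and let $L_n$ and the bijection $\varphi:L_n\to E^{n-1}$ be as in the context. If $A\subseteq L_n$ is an intersecting antichain in $E^n$, then $\varphi(A)$ is an intersecting antichain in $E^{n-1}$; and if $B\subseteq E^{n-1}$ is an intersecting antichain, then $\varphi^{-1}(B)$ is an intersecting antichain in $E^n$.
   Context: $E=\{0,\dots,k-1\}$. For $\mathbf a,\mathbf b\in E^m$ write $\mathbf a\preceq\mathbf b$ if $a_i\le b_i$ for all $i$. $A\subseteq E^m$ is an antichain if there are no distinct $\mathbf a,\mathbf b\in A$ with $\mathbf a\preceq\mathbf b$; $A$ is intersecting if for all $\mathbf a,\mathbf b\in A$ (including $\mathbf a=\mathbf b$) there is $i$ with $a_i+b_i\ge k$. For $\mathbf a\in E^n$, $w(\mathbf a)=a_1+\dots+a_n$, and $\mathcal B_t=\{\mathbf a\in E^n: w(\mathbf a)=t\}$. Let $g=\lfloor n(k-1)/2\rfloor$ and $C_i=\{\mathbf a\in E^n: a_1=i\}$. Define $L_n=(\mathcal B_0\cup\dots\cup\mathcal B_g)\cap(C_0\cup C_{k-1})$ if $n(k-1)$ is odd, and $L_n=((\mathcal B_0\cup\dots\cup\mathcal B_{g-1})\cap(C_0\cup C_{k-1}))\cup(\mathcal B_g\cap C_0)$ if $n(k-1)$ is even. For $a\in E$ let $\overline a=k-1-a$. Define $\varphi(a_1,\dots,a_n)=(a_2,\dots,a_n)$ if $a_1=0$ and $\varphi(a_1,\dots,a_n)=(\overline{a}_2,\dots,\overline{a}_n)$ if $a_1=k-1$;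 this map is a bijection $L_n\to E^{n-1}$. *)

theory Defs
  imports Main
begin

text \<open>Vectors in E^m, E = {0..k-1}, are lists of naturals of length m with entries < k.
  The coordinate a_1 is the head of the list.\<close>

definition cube :: "nat \<Rightarrow> nat \<Rightarrow> nat list set" where
  "cube k m = {a. length a = m \<and> (\<forall>x\<in>set a. x < k)}"

definition vle :: "nat list \<Rightarrow> nat list \<Rightarrow> bool" where
  "vle a b \<longleftrightarrow> list_all2 (\<le>) a b"

definition is_antichain :: "nat list set \<Rightarrow> bool" where
  "is_antichain A \<longleftrightarrow> (\<forall>a\<in>A. \<forall>b\<in>A. a \<noteq> b \<longrightarrow> \<not> vle a b)"

definition is_intersecting :: "nat \<Rightarrow> nat list set \<Rightarrow> bool" where
  "is_intersecting k A \<longleftrightarrow> (\<forall>a\<in>A. \<forall>b\<in>A. \<exists>i < length a. a ! i + b ! i \<ge> k)"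

definition weight :: "nat list \<Rightarrow> nat" where
  "weight a = sum_list a"

definition Lset :: "nat \<Rightarrow> nat \<Rightarrow> nat list set" where
  "Lset k n = (let g = n * (k - 1) div 2 in
     if odd (n * (k - 1))
     then {a \<in> cube k n. weight a \<le> g \<and> (hd a = 0 \<or> hd a = k - 1)}
     else {a \<in> cube k n. (weight a < g \<and> (hd a = 0 \<or> hd a = k - 1))
                         \<or> (weight a = g \<and> hd a = 0)})"

definition phi :: "nat \<Rightarrow> nat list \<Rightarrow> nat list" where
  "phi k a = (if hd a = 0 then tl a else map (\<lambda>x. k - 1 - x) (tl a))"

end

theory Submission
  imports Defs
begin

definition cm :: "nat \<Rightarrow> nat list \<Rightarrow> nat list" where
  "cm k t = map (\<lambda>x. k - 1 - x) t"

definition inter :: "nat \<Rightarrow> nat list \<Rightarrow> nat list \<Rightarrow> bool" where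
  "inter k a b \<longleftrightarrow> (\<exists>i < length a. a ! i + b ! i \<ge> k)"

lemma inter_Nil[simp]: "\<not> inter k [] t" by (simp add: inter_def)

lemma inter_Cons[simp]: "inter k (x#s) (y#t) \<longleftrightarrow> k \<le> x+y \<or> inter k s t"
  by (auto simp: inter_def less_Suc_eq_0_disj)

lemma phi0: "phi k (0#t) = t" by (simp add: phi_def)
lemma phi1: "k \<ge> 2 \<Longrightarrow> phi k ((k-1)#t) = cm k t" by (simp add: phi_def cm_def)
lemma phi1': "k \<ge> 2 \<Longrightarrow> phi k ((k - Suc 0)#t) = cm k t" by (simp add: phi_def cm_def)

lemma cm_len[simp]: "length (cm k t) = length t" by (simp add: cm_def)
lemma cm_Cons[simp]: "cm k (x#t) = (k-1-x) # cm k t" "cm k [] = []" by (simp_all add: cm_def)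

lemma vle_Cons[simp]: "vle (x#s) (y#t) \<longleftrightarrow> x \<le> y \<and> vle s t"
  by (simp add: vle_def)
lemma vle_Nil[simp]: "vle [] []" by (simp add: vle_def)
lemma vle_len: "vle s t \<Longrightarrow> length s = length t"
  by (simp add: vle_def list_all2_lengthD)

lemma not_inter: "length s = length t \<Longrightarrow> \<not> inter k s t \<longleftrightarrow> list_all2 (\<lambda>x y. x+y<k) s t"
  by (induct s t rule: list_induct2) auto

lemma sum_ge: "list_all2 (\<lambda>x y. c \<le> x+y) s t \<Longrightarrow> length s * c \<le> sum_list s + sum_list t"
  by (induct s t rule: list_all2_induct) auto

lemma vle_cm_right: "length s = length t \<Longrightarrow> \<forall>y\<in>set t. y<k \<Longrightarrow>
   vle s (cm k t) \<longleftrightarrow> list_all2 (\<lambda>x y. x+y \<le> k-1) s t"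
  by (induct s t rule: list_induct2) auto

lemma vle_cm_left: "length s = length t \<Longrightarrow>
   vle (cm k s) t \<longleftrightarrow> list_all2 (\<lambda>x y. k-1 \<le> x+y) s t"
  by (induct s t rule: list_induct2) auto

lemma vle_cm_cm: "length s = length t \<Longrightarrow> \<forall>y\<in>set s. y<k \<Longrightarrow> \<forall>y\<in>set t. y<k \<Longrightarrow>
   vle (cm k s) (cm k t) \<longleftrightarrow> vle t s"
  by (induct s t rule: list_induct2) auto

lemma inter_cm_right: "length s = length t \<Longrightarrow> \<forall>y\<in>set t. y<k \<Longrightarrow>
   \<not> inter k s (cm k t) \<longleftrightarrow> vle s t"
  by (induct s t rule: list_induct2) auto

lemma inter_cm_left: "length s = length t \<Longrightarrow> \<forall>y\<in>set s. y<k \<Longrightarrow>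
   \<not> inter k (cm k s) t \<longleftrightarrow> vle t s"
  by (induct s t rule: list_induct2) auto

lemma inter_cm_cm: "length s = length t \<Longrightarrow> \<forall>y\<in>set s. y<k \<Longrightarrow> \<forall>y\<in>set t. y<k \<Longrightarrow>
   \<not> inter k (cm k s) (cm k t) \<Longrightarrow> list_all2 (\<lambda>x y. k-1 \<le> x+y) s t"
  by (induct s t rule: list_induct2) auto

lemma cm_inj: "length s = length t \<Longrightarrow> \<forall>y\<in>set s. y<k \<Longrightarrow> \<forall>y\<in>set t. y<k \<Longrightarrow>
   cm k s = cm k t \<Longrightarrow> s = t"
  by (induct s t rule: list_induct2) auto

lemma cm_cube: "t \<in> cube k m \<Longrightarrow> k \<ge> 2 \<Longrightarrow> cm k t \<in> cube k m"
  by (auto simp: cube_def cm_def)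

lemma L_cons: "a \<in> Lset k n \<Longrightarrow> n \<ge> 1 \<Longrightarrow>
   \<exists>x t. a = x#t \<and> (x=0 \<or> x=k-1) \<and> t \<in> cube k (n-1)"
  apply (cases a)
   apply (auto simp: Lset_def Let_def cube_def split: if_splits)
  done

lemma L_w: "a \<in> Lset k n \<Longrightarrow> b \<in> Lset k n \<Longrightarrow> weight a + weight b \<le> n*(k-1)"
  by (auto simp: Lset_def Let_def split: if_splits)

lemma L_w2: "a \<in> Lset k n \<Longrightarrow> b \<in> Lset k n \<Longrightarrow> hd b = k - 1 \<Longrightarrow> k \<ge> 2 \<Longrightarrow>
   weight a + weight b < n*(k-1)"
proof -
  have o: "odd m \<Longrightarrow> 2 * (m div 2) < m" for m :: nat by presburger
  have e: "even m \<Longrightarrow> 2 * (m div 2) = m" for m :: nat by presburger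
  assume a: "a \<in> Lset k n" "b \<in> Lset k n" "hd b = k - 1" "k \<ge> 2"
  show ?thesis
  proof (cases "odd (n*(k-1))")
    case True
    with a have "weight a \<le> n*(k-1) div 2" "weight b \<le> n*(k-1) div 2"
      by (auto simp: Lset_def Let_def)
    with o[OF True] show ?thesis by linarith
  next
    case False
    with a have "weight a \<le> n*(k-1) div 2" "weight b < n*(k-1) div 2"
      by (auto simp: Lset_def Let_def)
    with e[of "n*(k-1)"] False show ?thesis by linarith
  qed
qed

lemma L_sub: "Lset k n \<subseteq> cube k n"
  by (auto simp: Lset_def Let_def)

lemma inter_sym: "length a = length b \<Longrightarrow> inter k a b \<longleftrightarrow> inter k b a"
  by (auto simp: inter_def add.commute)

lemma cube_len: "t \<in> cube k m \<Longrightarrow> length t = m" by (simp add: cube_def)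
lemma cube_lt: "t \<in> cube k m \<Longrightarrow> \<forall>y\<in>set t. y < k" by (simp add: cube_def)

lemma nk: "n \<ge> 1 \<Longrightarrow> n*(k-1) = (n-1)*(k-1) + (k-1::nat)"
  by (cases n) auto

lemma P1_inter:
  assumes k: "k \<ge> 2" and n: "n \<ge> 1" and aL: "a \<in> Lset k n" and bL: "b \<in> Lset k n"
    and ab: "inter k a b" and ac1: "a \<noteq> b \<Longrightarrow> \<not> vle a b" and ac2: "b \<noteq> a \<Longrightarrow> \<not> vle b a"
  shows "inter k (phi k a) (phi k b)"
proof -
  obtain x s where a: "a = x#s" "x=0 \<or> x=k-1" "s \<in> cube k (n-1)" using L_cons[OF aL n] by blast
  obtain y t where b: "b = y#t" "y=0 \<or> y=k-1" "t \<in> cube k (n-1)" using L_cons[OF bL n] by blast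
  have ls: "length s = length t" using a b by (simp add: cube_len)
  have k0: "k - 1 \<noteq> 0" using k by simp
  show ?thesis
  proof (cases "x = 0")
    case x: True
    show ?thesis
    proof (cases "y = 0")
      case True then show ?thesis using x a b ab k by (simp add: phi0)
    next
      case False
      then have y: "y = k-1" using b by simp
      show ?thesis
      proof (rule ccontr)
        assume "\<not> inter k (phi k a) (phi k b)"
        then have "\<not> inter k s (cm k t)" using x y a b k by (simp add: phi0 phi1 phi1')
        then have "vle s t" using inter_cm_right[OF ls cube_lt[OF b(3)]] by simp
        then have "vle a b" using a b x y by simp
        moreover have "a \<noteq> b" using a b x y k0 by simp
        ultimately show False using ac1 by blast
      qed
    qed
  next
    case False
    then have x: "x = k-1" using a by simp
    show ?thesis
    proof (cases "y = 0")
      case y: True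
      show ?thesis
      proof (rule ccontr)
        assume "\<not> inter k (phi k a) (phi k b)"
        then have "\<not> inter k (cm k s) t" using x y a b k by (simp add: phi0 phi1 phi1')
        then have "vle t s" using inter_cm_left[OF ls cube_lt[OF a(3)]] by simp
        then have "vle b a" using a b x y by simp
        moreover have "a \<noteq> b" using a b x y k0 by simp
        ultimately show False using ac2 by blast
      qed
    next
      case False
      then have y: "y = k-1" using b by simp
      show ?thesis
      proof (rule ccontr)
        assume "\<not> inter k (phi k a) (phi k b)"
        then have "\<not> inter k (cm k s) (cm k t)" using x y a b k by (simp add: phi1 phi1')
        then have "list_all2 (\<lambda>x y. k-1 \<le> x+y) s t"
          using inter_cm_cm[OF ls cube_lt[OF a(3)] cube_lt[OF b(3)]] by simp
        from sum_ge[OF this] have "(n-1)*(k-1) \<le> sum_list s + sum_list t"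
          using a by (simp add: cube_len)
        moreover have "weight a + weight b \<le> n*(k-1)" using L_w[OF aL bL] .
        ultimately show False using a b x y nk[OF n, of k] k by (simp add: weight_def)
      qed
    qed
  qed
qed

lemma P1_anti:
  assumes k: "k \<ge> 2" and n: "n \<ge> 1" and aL: "a \<in> Lset k n" and bL: "b \<in> Lset k n"
    and ab: "inter k a b" and ac1: "a \<noteq> b \<Longrightarrow> \<not> vle a b" and ac2: "b \<noteq> a \<Longrightarrow> \<not> vle b a"
    and ne: "phi k a \<noteq> phi k b"
  shows "\<not> vle (phi k a) (phi k b)"
proof
  assume v: "vle (phi k a) (phi k b)"
  obtain x s where a: "a = x#s" "x=0 \<or> x=k-1" "s \<in> cube k (n-1)" using L_cons[OF aL n] by blast
  obtain y t where b: "b = y#t" "y=0 \<or> y=k-1" "t \<in> cube k (n-1)" using L_cons[OF bL n] by blast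
  have ls: "length s = length t" using a b by (simp add: cube_len)
  have k0: "k - 1 \<noteq> 0" using k by simp
  have anb: "a \<noteq> b" using ne by auto
  show False
  proof (cases "x = 0")
    case x: True
    show ?thesis
    proof (cases "y = 0")
      case True then show ?thesis using x a b v ac1 anb by (simp add: phi0)
    next
      case False
      then have y: "y = k-1" using b by simp
      have "vle s (cm k t)" using v x y a b k by (simp add: phi0 phi1 phi1')
      then have "list_all2 (\<lambda>x y. x+y \<le> k-1) s t" using vle_cm_right[OF ls cube_lt[OF b(3)]] by simp
      then have "list_all2 (\<lambda>x y. x+y < k) s t" by (rule list_all2_mono) (use k in auto)
      then have "\<not> inter k s t" using not_inter[OF ls] by simp
      then show False using ab a b x y k by simp
    qed
  next
    case False
    then have x: "x = k-1" using a by simp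
    show ?thesis
    proof (cases "y = 0")
      case y: True
      have "vle (cm k s) t" using v x y a b k by (simp add: phi0 phi1 phi1')
      then have "list_all2 (\<lambda>x y. k-1 \<le> x+y) s t" using vle_cm_left[OF ls] by simp
      from sum_ge[OF this] have "(n-1)*(k-1) \<le> sum_list s + sum_list t"
        using a by (simp add: cube_len)
      moreover have "weight b + weight a < n*(k-1)" using L_w2[OF bL aL _ k] a x by simp
      ultimately show False using a b x y nk[OF n, of k] k by (simp add: weight_def)
    next
      case False
      then have y: "y = k-1" using b by simp
      have "vle (cm k s) (cm k t)" using v x y a b k by (simp add: phi1 phi1')
      then have "vle t s" using vle_cm_cm[OF ls cube_lt[OF a(3)] cube_lt[OF b(3)]] by simp
      then show False using ac2 anb a b x y by simp
    qed
  qed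
qed

lemma P2_inter:
  assumes k: "k \<ge> 2" and n: "n \<ge> 1" and aL: "a \<in> Lset k n" and bL: "b \<in> Lset k n"
    and ab: "inter k (phi k a) (phi k b)"
    and ac1: "phi k a \<noteq> phi k b \<Longrightarrow> \<not> vle (phi k a) (phi k b)"
    and ac2: "phi k b \<noteq> phi k a \<Longrightarrow> \<not> vle (phi k b) (phi k a)"
  shows "inter k a b"
proof -
  have gen: "inter k a b" if aL: "a \<in> Lset k n" and bL: "b \<in> Lset k n"
    and ab: "inter k (phi k a) (phi k b)"
    and ac1: "phi k a \<noteq> phi k b \<Longrightarrow> \<not> vle (phi k a) (phi k b)"
    and h: "hd a = 0" for a b
  proof -
    obtain x s where a: "a = x#s" "x=0 \<or> x=k-1" "s \<in> cube k (n-1)" using L_cons[OF aL n] by blast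
    obtain y t where b: "b = y#t" "y=0 \<or> y=k-1" "t \<in> cube k (n-1)" using L_cons[OF bL n] by blast
    have ls: "length s = length t" using a b by (simp add: cube_len)
    have x: "x = 0" using a h by simp
    show ?thesis
    proof (cases "y = 0")
      case True then show ?thesis using x a b ab by (simp add: phi0)
    next
      case False
      then have y: "y = k-1" using b by simp
      show ?thesis
      proof (rule ccontr)
        assume "\<not> inter k a b"
        then have "\<not> inter k s t" using a b x y by simp
        then have "list_all2 (\<lambda>x y. x+y < k) s t" using not_inter[OF ls] by simp
        then have "list_all2 (\<lambda>x y. x+y \<le> k-1) s t" by (rule list_all2_mono) (use k in auto)
        then have "vle s (cm k t)" using vle_cm_right[OF ls cube_lt[OF b(3)]] by simp
        then have "vle (phi k a) (phi k b)" using x y a b k by (simp add: phi0 phi1 phi1')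
        then have "phi k a = phi k b" using ac1 by blast
        then have "s = cm k t" using x y a b k by (simp add: phi0 phi1 phi1')
        then have "vle (cm k t) s" by (simp add: vle_def list.rel_refl)
        then have "list_all2 (\<lambda>x y. k-1 \<le> x+y) t s" using vle_cm_left ls by simp
        from sum_ge[OF this] have "(n-1)*(k-1) \<le> sum_list t + sum_list s"
          using b by (simp add: cube_len)
        moreover have "weight a + weight b < n*(k-1)" using L_w2[OF aL bL _ k] b y by simp
        ultimately show False using a b x y nk[OF n, of k] k by (simp add: weight_def)
      qed
    qed
  qed
  obtain x s where a: "a = x#s" "x=0 \<or> x=k-1" "s \<in> cube k (n-1)" using L_cons[OF aL n] by blast
  obtain y t where b: "b = y#t" "y=0 \<or> y=k-1" "t \<in> cube k (n-1)" using L_cons[OF bL n] by blast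
  have lab: "length a = length b" using a b by (simp add: cube_len)
  have lph: "length (phi k a) = length (phi k b)" using a b by (auto simp: phi_def cube_len)
  show ?thesis
  proof (cases "x = 0")
    case True then show ?thesis using gen[OF aL bL ab ac1] a by simp
  next
    case xn: False
    show ?thesis
    proof (cases "y = 0")
      case True
      have "inter k (phi k b) (phi k a)" using ab inter_sym[OF lph] by simp
      then have "inter k b a" using gen[OF bL aL _ ac2] b True by simp
      then show ?thesis using inter_sym[OF lab] by simp
    next
      case False
      then have "x = k-1" "y = k-1" using a b xn by auto
      moreover have "k \<le> (k-1) + (k-1)" using k by simp
      ultimately show ?thesis using a b by simp
    qed
  qed
qed

lemma P2_anti:
  assumes k: "k \<ge> 2" and n: "n \<ge> 1" and aL: "a \<in> Lset k n" and bL: "b \<in> Lset k n"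
    and ab: "inter k (phi k a) (phi k b)"
    and ac1: "phi k a \<noteq> phi k b \<Longrightarrow> \<not> vle (phi k a) (phi k b)"
    and ac2: "phi k b \<noteq> phi k a \<Longrightarrow> \<not> vle (phi k b) (phi k a)"
    and ne: "a \<noteq> b"
  shows "\<not> vle a b"
proof
  assume v: "vle a b"
  obtain x s where a: "a = x#s" "x=0 \<or> x=k-1" "s \<in> cube k (n-1)" using L_cons[OF aL n] by blast
  obtain y t where b: "b = y#t" "y=0 \<or> y=k-1" "t \<in> cube k (n-1)" using L_cons[OF bL n] by blast
  have ls: "length s = length t" using a b by (simp add: cube_len)
  have k0: "k - 1 \<noteq> 0" using k by simp
  show False
  proof (cases "x = 0")
    case x: True
    show ?thesis
    proof (cases "y = 0")
      case True then show ?thesis using x a b v ac1 ne by (simp add: phi0)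
    next
      case False
      then have y: "y = k-1" using b by simp
      have "vle s t" using v a b by simp
      then have "\<not> inter k s (cm k t)" using inter_cm_right[OF ls cube_lt[OF b(3)]] by simp
      then show False using ab a b x y k by (simp add: phi0 phi1 phi1')
    qed
  next
    case False
    then have x: "x = k-1" using a by simp
    show ?thesis
    proof (cases "y = 0")
      case y: True
      then show False using v a b x k by simp
    next
      case False
      then have y: "y = k-1" using b by simp
      have st: "s \<noteq> t" using ne a b x y by simp
      have "vle s t" using v a b by simp
      then have "vle (cm k t) (cm k s)"
        using vle_cm_cm[of t s k] ls cube_lt[OF a(3)] cube_lt[OF b(3)] by simp
      moreover have "cm k t \<noteq> cm k s"
        using cm_inj[of t s k] ls cube_lt[OF a(3)] cube_lt[OF b(3)] st by auto
      ultimately show False using ac2 a b x y k by (simp add: phi1 phi1')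
    qed
  qed
qed

theorem lemma4:
  fixes k n :: nat
  assumes "k \<ge> 2" and "n \<ge> 1"
  shows "(\<forall>A. A \<subseteq> Lset k n \<and> is_intersecting k A \<and> is_antichain A \<longrightarrow>
            phi k ` A \<subseteq> cube k (n - 1) \<and> is_intersecting k (phi k ` A) \<and> is_antichain (phi k ` A))
       \<and> (\<forall>B. B \<subseteq> cube k (n - 1) \<and> is_intersecting k B \<and> is_antichain B \<longrightarrow>
            (let A = {a \<in> Lset k n. phi k a \<in> B} in
              A \<subseteq> cube k n \<and> is_intersecting k A \<and> is_antichain A))"
proof (intro conjI allI impI)
  have isI: "is_intersecting k X \<longleftrightarrow> (\<forall>a\<in>X. \<forall>b\<in>X. inter k a b)" for X
    by (simp add: is_intersecting_def inter_def)
  have phic: "phi k a \<in> cube k (n-1)" if aL: "a \<in> Lset k n" for a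
  proof -
    obtain x s where a: "a = x#s" "x=0 \<or> x=k-1" "s \<in> cube k (n-1)"
      using L_cons[OF aL assms(2)] by blast
    then show ?thesis using assms(1) cm_cube[OF a(3)] by (auto simp: phi0 phi1 phi1')
  qed
  fix A assume h: "A \<subseteq> Lset k n \<and> is_intersecting k A \<and> is_antichain A"
  then show "phi k ` A \<subseteq> cube k (n - 1)" using phic by blast
  show "is_intersecting k (phi k ` A)" unfolding isI
  proof clarify
    fix a b assume "a \<in> A" "b \<in> A"
    then show "inter k (phi k a) (phi k b)"
      using P1_inter[OF assms, of a b] h unfolding isI is_antichain_def by blast
  qed
  show "is_antichain (phi k ` A)" unfolding is_antichain_def
  proof clarify
    fix a b assume "a \<in> A" "b \<in> A" "phi k a \<noteq> phi k b" "vle (phi k a) (phi k b)"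
    then show False
      using P1_anti[OF assms, of a b] h unfolding isI is_antichain_def by blast
  qed
next
  fix B assume h: "B \<subseteq> cube k (n - 1) \<and> is_intersecting k B \<and> is_antichain B"
  define A where "A = {a \<in> Lset k n. phi k a \<in> B}"
  have isI: "is_intersecting k X \<longleftrightarrow> (\<forall>a\<in>X. \<forall>b\<in>X. inter k a b)" for X
    by (simp add: is_intersecting_def inter_def)
  have "A \<subseteq> cube k n" using L_sub A_def by blast
  moreover have "is_intersecting k A" unfolding isI
  proof clarify
    fix a b assume "a \<in> A" "b \<in> A"
    then show "inter k a b"
      using P2_inter[OF assms, of a b] h unfolding isI is_antichain_def A_def by blast
  qed
  moreover have "is_antichain A" unfolding is_antichain_def
  proof clarify
    fix a b assume "a \<in> A" "b \<in> A" "a \<noteq> b" "vle a b"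
    then show False
      using P2_anti[OF assms, of a b] h unfolding isI is_antichain_def A_def by blast
  qed
  ultimately show "let A = {a \<in> Lset k n. phi k a \<in> B} in
              A \<subseteq> cube k n \<and> is_intersecting k A \<and> is_antichain A"
    unfolding A_def Let_def by blast
qed

end
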